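(* Let $G$ be a finite simple graph without isolated vertices, with vertices $v_1,\dots,v_n$, and let $f_j=\mathrm{dp}(v_j)$ for $1\le j\le n$ (so $(f_1,\dots,f_n)$ is, up to ordering, the degree polynomial sequence of $G$). Then: (a) $\sum_{j=1}^{n} sc(f_j)$ is even; (b) for every vertex $v$ of $G$ and every term $kx^{i}$ of $\mathrm{dp}(v)$ with $k\neq 0$, there are at least $k$ distinct vertices $w_1,\dots,w_k$ of $G$, all distinct from $v$, such that $sc(\mathrm{dp}(w_1))=\dots=sc(\mathrm{dp}(w_k))=i$; (c) both $\sum_{j:\ sc(f_j)\text{ odd}} sec(f_j)$ and $\sum_{j:\ sc(f_j)\text{ even}} sec(f_j)$ are even integers.
   Context: For a vertex $v$ of a simple graph $G$, the degree polynomial $\mathrm{dp}(v)\in\mathbb{Z}[x]$ is the polynomial in which the coefficient of $x^{i}$ is the number of neighbors of $v$ that have degree $i$ in $G$ (so $\mathrm{dp}(v)=0$ if $v$ is isolated). For a polynomial $f=\sum_i a_i x^i$ with nonnegative integer coefficients, $sc(f)$ denotes the sum of all its coefficients (with $sc(0)=0$), $sec(f)$ the sum of the coefficients $a_i$ with $i$ even, and $soc(f)$ the sum of the coefficients $a_i$ with $i$ odd. The degree polynomial sequence of $G$ is the list of degree polynomials of its vertices arranged in non-increasing order with respect to a fixed total order on polynomials. *)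

theory Defs
  imports "HOL-Computational_Algebra.Polynomial"
begin

definition simple_graph :: "'a set \<Rightarrow> ('a \<Rightarrow> 'a \<Rightarrow> bool) \<Rightarrow> bool" where
  "simple_graph V E \<longleftrightarrow> finite V \<and> (\<forall>u v. E u v \<longrightarrow> u \<in> V \<and> v \<in> V)
     \<and> (\<forall>u v. E u v \<longrightarrow> E v u) \<and> (\<forall>v. \<not> E v v)"

definition neighbors :: "'a set \<Rightarrow> ('a \<Rightarrow> 'a \<Rightarrow> bool) \<Rightarrow> 'a \<Rightarrow> 'a set" where
  "neighbors V E v = {u \<in> V. E v u}"

definition gdeg :: "'a set \<Rightarrow> ('a \<Rightarrow> 'a \<Rightarrow> bool) \<Rightarrow> 'a \<Rightarrow> nat" where
  "gdeg V E v = card (neighbors V E v)"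

definition dp :: "'a set \<Rightarrow> ('a \<Rightarrow> 'a \<Rightarrow> bool) \<Rightarrow> 'a \<Rightarrow> nat poly" where
  "dp V E v = (\<Sum>u \<in> neighbors V E v. monom 1 (gdeg V E u))"

definition sc :: "nat poly \<Rightarrow> nat" where
  "sc f = (\<Sum>i\<le>degree f. coeff f i)"

definition sec :: "nat poly \<Rightarrow> nat" where
  "sec f = (\<Sum>i\<in>{i. i \<le> degree f \<and> even i}. coeff f i)"

definition soc :: "nat poly \<Rightarrow> nat" where
  "soc f = (\<Sum>i\<in>{i. i \<le> degree f \<and> odd i}. coeff f i)"

end

theory Submission
  imports Defs
begin

lemma card_filter_sum:
  assumes "finite A"
  shows "card {u\<in>A. P u} = (\<Sum>u\<in>A. if P u then 1 else 0::nat)"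
  using assms by (simp add: sum.If_cases Int_def)

lemma double_count:
  assumes "finite A" "finite B"
  shows "(\<Sum>v\<in>B. card {u\<in>A. R v u}) = (\<Sum>u\<in>A. card {v\<in>B. R v u})"
proof -
  have "(\<Sum>v\<in>B. card {u\<in>A. R v u}) = (\<Sum>v\<in>B. \<Sum>u\<in>A. if R v u then 1 else 0::nat)"
    using assms by (simp add: card_filter_sum)
  also have "\<dots> = (\<Sum>u\<in>A. \<Sum>v\<in>B. if R v u then 1 else 0::nat)"
    by (rule sum.swap)
  also have "\<dots> = (\<Sum>u\<in>A. card {v\<in>B. R v u})"
    using assms by (simp add: card_filter_sum)
  finally show ?thesis .
qed

lemma sym_even:
  assumes "finite A" "\<forall>u v. E u v \<longrightarrow> E v u" "\<forall>v. \<not> E v v"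
  shows "even (\<Sum>v\<in>A. card {u\<in>A. E v u})"
  using assms(1)
proof (induction A rule: finite_induct)
  case empty
  then show ?case by simp
next
  case (insert a A)
  have s1: "(\<Sum>v\<in>A. card {u\<in>insert a A. E v u}) = (\<Sum>v\<in>A. card {u\<in>A. E v u} + (if E v a then 1 else 0))"
  proof (rule sum.cong)
    fix v assume "v \<in> A"
    show "card {u\<in>insert a A. E v u} = card {u\<in>A. E v u} + (if E v a then 1 else 0)"
    proof (cases "E v a")
      case True
      have "{u\<in>insert a A. E v u} = insert a {u\<in>A. E v u}" using True by auto
      then show ?thesis using True insert by simp
    next
      case False
      have "{u\<in>insert a A. E v u} = {u\<in>A. E v u}" using False by auto
      then show ?thesis using False by simp
    qed
  qed simp
  have s2: "card {u\<in>insert a A. E a u} = card {u\<in>A. E a u}"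
  proof -
    have "{u\<in>insert a A. E a u} = {u\<in>A. E a u}" using assms(3) by auto
    then show ?thesis by simp
  qed
  have s3: "(\<Sum>v\<in>A. (if E v a then 1 else 0::nat)) = card {u\<in>A. E a u}"
  proof -
    have "{u\<in>A. E a u} = {v\<in>A. E v a}" using assms(2) by blast
    then show ?thesis using card_filter_sum[OF insert(1), of "\<lambda>v. E v a"] by simp
  qed
  have "(\<Sum>v\<in>insert a A. card {u\<in>insert a A. E v u})
     = card {u\<in>A. E a u} + (\<Sum>v\<in>A. card {u\<in>insert a A. E v u})"
    using insert s2 by simp
  also have "\<dots> = (\<Sum>v\<in>A. card {u\<in>A. E v u}) + 2 * card {u\<in>A. E a u}"
    unfolding s1 sum.distrib s3 by simp
  finally show ?case using insert(3) by simp
qed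

lemma coeff_dp: "finite V \<Longrightarrow> coeff (dp V E v) i = card {u\<in>neighbors V E v. gdeg V E u = i}"
proof -
  assume fV: "finite V"
  have fN: "finite (neighbors V E v)" using fV by (simp add: neighbors_def)
  have "coeff (dp V E v) i = (\<Sum>u\<in>neighbors V E v. if gdeg V E u = i then 1 else 0::nat)"
    unfolding dp_def coeff_sum by (intro sum.cong) (auto simp: coeff_monom)
  also have "\<dots> = card {u\<in>neighbors V E v. gdeg V E u = i}"
    using card_filter_sum[OF fN, of "\<lambda>u. gdeg V E u = i"] by simp
  finally show ?thesis .
qed

lemma sum_coeff_dp:
  assumes "finite V" "finite I"
  shows "(\<Sum>i\<in>I. coeff (dp V E v) i) = card {u\<in>neighbors V E v. gdeg V E u \<in> I}"
proof -
  have fN: "finite (neighbors V E v)" using assms by (simp add: neighbors_def)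
  have "(\<Sum>i\<in>I. coeff (dp V E v) i) = (\<Sum>i\<in>I. \<Sum>u\<in>neighbors V E v. if gdeg V E u = i then 1 else 0::nat)"
    using assms(1) by (intro sum.cong refl) (simp only: coeff_dp card_filter_sum[OF fN])
  also have "\<dots> = (\<Sum>u\<in>neighbors V E v. \<Sum>i\<in>I. if gdeg V E u = i then 1 else 0::nat)"
    by (rule sum.swap)
  also have "\<dots> = (\<Sum>u\<in>neighbors V E v. if gdeg V E u \<in> I then 1 else 0::nat)"
  proof (intro sum.cong refl)
    fix u
    show "(\<Sum>i\<in>I. if gdeg V E u = i then 1 else 0::nat) = (if gdeg V E u \<in> I then 1 else 0)"
      using sum.delta'[OF assms(2), of "gdeg V E u" "\<lambda>_. 1::nat"] by simp
  qed
  also have "\<dots> = card {u\<in>neighbors V E v. gdeg V E u \<in> I}"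
    using card_filter_sum[OF fN, of "\<lambda>u. gdeg V E u \<in> I"] by simp
  finally show ?thesis .
qed

lemma deg_le:
  assumes "finite V" "u \<in> neighbors V E v"
  shows "gdeg V E u \<le> degree (dp V E v)"
proof (rule le_degree)
  have fN: "finite (neighbors V E v)" using assms by (simp add: neighbors_def)
  have "u \<in> {w\<in>neighbors V E v. gdeg V E w = gdeg V E u}" using assms by simp
  then have "{w\<in>neighbors V E v. gdeg V E w = gdeg V E u} \<noteq> {}" by blast
  moreover have "finite {w\<in>neighbors V E v. gdeg V E w = gdeg V E u}" using fN by simp
  ultimately have "card {w\<in>neighbors V E v. gdeg V E w = gdeg V E u} \<noteq> 0" by simp
  then show "coeff (dp V E v) (gdeg V E u) \<noteq> 0" using assms by (simp add: coeff_dp)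
qed

lemma sc_dp: "finite V \<Longrightarrow> sc (dp V E v) = gdeg V E v"
proof -
  assume fV: "finite V"
  have "sc (dp V E v) = card {u\<in>neighbors V E v. gdeg V E u \<in> {..degree (dp V E v)}}"
    unfolding sc_def using fV by (simp add: sum_coeff_dp)
  also have "\<dots> = card (neighbors V E v)"
    using deg_le[OF fV] by (intro arg_cong[where f=card]) auto
  finally show ?thesis by (simp add: gdeg_def)
qed

lemma sec_dp: "finite V \<Longrightarrow> sec (dp V E v) = card {u\<in>neighbors V E v. even (gdeg V E u)}"
proof -
  assume fV: "finite V"
  have "sec (dp V E v) = card {u\<in>neighbors V E v. gdeg V E u \<in> {i. i \<le> degree (dp V E v) \<and> even i}}"
    unfolding sec_def using fV by (simp add: sum_coeff_dp)
  also have "\<dots> = card {u\<in>neighbors V E v. even (gdeg V E u)}"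
    using deg_le[OF fV] by (intro arg_cong[where f=card]) auto
  finally show ?thesis .
qed

theorem theorem4p12:
  fixes V :: "'a set" and E :: "'a \<Rightarrow> 'a \<Rightarrow> bool"
  assumes "simple_graph V E"
    and "\<forall>v\<in>V. \<exists>u\<in>V. E v u"
  shows "even (\<Sum>v\<in>V. sc (dp V E v))
    \<and> (\<forall>v\<in>V. \<forall>i k. coeff (dp V E v) i = k \<and> k \<noteq> 0 \<longrightarrow>
           (\<exists>W. W \<subseteq> V - {v} \<and> card W = k \<and> (\<forall>w\<in>W. sc (dp V E w) = i)))
    \<and> even (\<Sum>v\<in>{v\<in>V. odd (sc (dp V E v))}. sec (dp V E v))
    \<and> even (\<Sum>v\<in>{v\<in>V. even (sc (dp V E v))}. sec (dp V E v))"
proof -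
  have fV: "finite V" and sym: "\<forall>u v. E u v \<longrightarrow> E v u" and irr: "\<forall>v. \<not> E v v"
    and inV: "\<forall>u v. E u v \<longrightarrow> u \<in> V \<and> v \<in> V"
    using assms(1) by (auto simp: simple_graph_def)
  define d where "d = gdeg V E"
  have sc: "\<And>v. sc (dp V E v) = d v" using fV by (simp add: sc_dp d_def)
  have dd: "\<And>v. d v = card {u\<in>V. E v u}" by (simp add: d_def gdeg_def neighbors_def)
  define A where "A = {v\<in>V. even (d v)}"
  define B where "B = {v\<in>V. odd (d v)}"
  have fA: "finite A" "finite B" using fV by (auto simp: A_def B_def)
  have sec: "\<And>v. sec (dp V E v) = card {u\<in>A. E v u}"
  proof -
    fix v
    have "{u\<in>neighbors V E v. even (gdeg V E u)} = {u\<in>A. E v u}"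
      by (auto simp: A_def d_def neighbors_def)
    then show "sec (dp V E v) = card {u\<in>A. E v u}" using fV by (simp add: sec_dp)
  qed
  have a: "even (\<Sum>v\<in>V. sc (dp V E v))"
    unfolding sc dd using sym_even[OF fV sym irr] .
  have b: "\<forall>v\<in>V. \<forall>i k. coeff (dp V E v) i = k \<and> k \<noteq> 0 \<longrightarrow>
           (\<exists>W. W \<subseteq> V - {v} \<and> card W = k \<and> (\<forall>w\<in>W. sc (dp V E w) = i))"
  proof (intro ballI allI impI)
    fix v i k assume "v \<in> V" "coeff (dp V E v) i = k \<and> k \<noteq> 0"
    then have "card {u\<in>neighbors V E v. gdeg V E u = i} = k" using fV by (simp add: coeff_dp)
    then show "\<exists>W. W \<subseteq> V - {v} \<and> card W = k \<and> (\<forall>w\<in>W. sc (dp V E w) = i)"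
      using irr sc d_def by (intro exI[of _ "{u\<in>neighbors V E v. gdeg V E u = i}"])
        (auto simp: neighbors_def)
  qed
  have c2: "even (\<Sum>v\<in>A. card {u\<in>A. E v u})" using sym_even[OF fA(1) sym irr] .
  have c1: "even (\<Sum>v\<in>B. card {u\<in>A. E v u})"
  proof -
    have "(\<Sum>v\<in>B. card {u\<in>A. E v u}) = (\<Sum>u\<in>A. card {v\<in>B. E v u})"
      using double_count[OF fA(1) fA(2)] .
    also have "\<dots> = (\<Sum>u\<in>A. card {v\<in>B. E u v})"
    proof -
      have "\<And>u. {v\<in>B. E v u} = {v\<in>B. E u v}" using sym by blast
      then show ?thesis by simp
    qed
    finally have e1: "(\<Sum>v\<in>B. card {u\<in>A. E v u}) = (\<Sum>u\<in>A. card {v\<in>B. E u v})" .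
    have "\<And>u. d u = card {v\<in>A. E u v} + card {v\<in>B. E u v}"
    proof -
      fix u
      have "{v\<in>V. E u v} = {v\<in>A. E u v} \<union> {v\<in>B. E u v}" by (auto simp: A_def B_def)
      moreover have "{v\<in>A. E u v} \<inter> {v\<in>B. E u v} = {}" by (auto simp: A_def B_def)
      ultimately show "d u = card {v\<in>A. E u v} + card {v\<in>B. E u v}"
        unfolding dd using fA by (simp add: card_Un_disjoint)
    qed
    then have "(\<Sum>u\<in>A. d u) = (\<Sum>u\<in>A. card {v\<in>A. E u v}) + (\<Sum>u\<in>A. card {v\<in>B. E u v})"
      by (simp add: sum.distrib)
    moreover have "even (\<Sum>u\<in>A. d u)" by (rule dvd_sum) (auto simp: A_def)
    ultimately show ?thesis using c2 e1 by simp
  qed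
  have A': "{v\<in>V. even (sc (dp V E v))} = A" by (simp add: sc A_def)
  have B': "{v\<in>V. odd (sc (dp V E v))} = B" by (simp add: sc B_def)
  show ?thesis using a b c1 c2 unfolding A' B' sec by blast
qed

end
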